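(* Let $H$ be a bigraph. Every directed path in the condensation of $H^+$ has at most three vertices.
   Context: A bigraph is a bipartite graph $H$ with fixed bipartition $(B,W)$ (black/white colours). The pair-digraph $H^+$ has vertices all ordered pairs $(u,v)$ of distinct vertices of $H$, and arcs $(u,v)\to(u',v)$ whenever $u,v$ have the same colour, $uu'\in E(H)$, $vu'\notin E(H)$, and $(u,v)\to(u,v')$ whenever $u,v$ have different colours, $vv'\in E(H)$, $uv\notin E(H)$. The condensation of a digraph is obtained by contracting each strong component to a single vertex and deleting loops and multiple arcs. *)

theory Defs
  imports Main
begin

definition bigraph :: "'a set \<Rightarrow> 'a set \<Rightarrow> ('a \<Rightarrow> 'a \<Rightarrow> bool) \<Rightarrow> bool" where
  "bigraph B W E \<longleftrightarrow> finite (B \<union> W) \<and> B \<inter> W = {} \<and>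
     (\<forall>x y. E x y \<longrightarrow> E y x) \<and>
     (\<forall>x y. E x y \<longrightarrow> (x \<in> B \<and> y \<in> W) \<or> (x \<in> W \<and> y \<in> B))"

definition same_colour :: "'a set \<Rightarrow> 'a set \<Rightarrow> 'a \<Rightarrow> 'a \<Rightarrow> bool" where
  "same_colour B W u v \<longleftrightarrow> (u \<in> B \<and> v \<in> B) \<or> (u \<in> W \<and> v \<in> W)"

definition pair_vertices :: "'a set \<Rightarrow> 'a set \<Rightarrow> ('a \<times> 'a) set" where
  "pair_vertices B W = {(u, v). u \<in> B \<union> W \<and> v \<in> B \<union> W \<and> u \<noteq> v}"

definition pair_arcs :: "'a set \<Rightarrow> 'a set \<Rightarrow> ('a \<Rightarrow> 'a \<Rightarrow> bool) \<Rightarrow> (('a \<times> 'a) \<times> ('a \<times> 'a)) set" where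
  "pair_arcs B W E = {(p, q). p \<in> pair_vertices B W \<and> q \<in> pair_vertices B W \<and>
     ((\<exists>u v u'. p = (u, v) \<and> q = (u', v) \<and> same_colour B W u v \<and> E u u' \<and> \<not> E v u') \<or>
      (\<exists>u v v'. p = (u, v) \<and> q = (u, v') \<and> \<not> same_colour B W u v \<and> E v v' \<and> \<not> E u v))}"

definition strong_component :: "'v set \<Rightarrow> ('v \<times> 'v) set \<Rightarrow> 'v \<Rightarrow> 'v set" where
  "strong_component V A x = {y \<in> V. (x, y) \<in> A\<^sup>* \<and> (y, x) \<in> A\<^sup>*}"

definition cond_vertices :: "'v set \<Rightarrow> ('v \<times> 'v) set \<Rightarrow> 'v set set" where
  "cond_vertices V A = strong_component V A ` V"

definition cond_arcs :: "'v set \<Rightarrow> ('v \<times> 'v) set \<Rightarrow> ('v set \<times> 'v set) set" where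
  "cond_arcs V A = {(C, D). C \<in> cond_vertices V A \<and> D \<in> cond_vertices V A \<and> C \<noteq> D \<and>
      (\<exists>x\<in>C. \<exists>y\<in>D. (x, y) \<in> A)}"

definition dipath :: "'w set \<Rightarrow> ('w \<times> 'w) set \<Rightarrow> 'w list \<Rightarrow> bool" where
  "dipath V A ps \<longleftrightarrow> ps \<noteq> [] \<and> distinct ps \<and> set ps \<subseteq> V \<and>
     (\<forall>i. Suc i < length ps \<longrightarrow> (ps ! i, ps ! Suc i) \<in> A)"

end

theory Submission
  imports Defs
begin

lemma sc_eq:
  assumes "x \<in> strong_component V A z" "y \<in> strong_component V A w"
    and "(x,y) \<in> A\<^sup>*" "(y,x) \<in> A\<^sup>*"
  shows "strong_component V A z = strong_component V A w"
proof -
  have zx: "(z,x) \<in> A\<^sup>*" "(x,z) \<in> A\<^sup>*" using assms(1) by (auto simp: strong_component_def)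
  have wy: "(w,y) \<in> A\<^sup>*" "(y,w) \<in> A\<^sup>*" using assms(2) by (auto simp: strong_component_def)
  have zw: "(z,w) \<in> A\<^sup>*" using zx(1) assms(3) wy(2) by (meson rtrancl_trans)
  have wz: "(w,z) \<in> A\<^sup>*" using wy(1) assms(4) zx(2) by (meson rtrancl_trans)
  show ?thesis unfolding strong_component_def using zw wz by (meson rtrancl_trans)
qed

lemma cond_generic:
  assumes key: "\<And>p q. (p,q) \<in> A \<Longrightarrow> (q,p) \<in> A\<^sup>* \<or> (\<forall>r. (r,p) \<notin> A) \<or> (\<forall>r. (q,r) \<notin> A)"
    and dp: "dipath (cond_vertices V A) (cond_arcs V A) ps"
  shows "length ps \<le> 3"
proof (rule ccontr)
  assume "\<not> length ps \<le> 3"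
  hence len: "length ps \<ge> 4" by simp
  have arcs: "\<And>i. Suc i < length ps \<Longrightarrow> (ps ! i, ps ! Suc i) \<in> cond_arcs V A"
    using dp by (auto simp: dipath_def)
  have a1: "(ps!0, ps!1) \<in> cond_arcs V A" using arcs[of 0] len by simp
  have a2: "(ps!1, ps!2) \<in> cond_arcs V A" using arcs[of 1] len by (simp add: numeral_2_eq_2)
  have a3: "(ps!2, ps!3) \<in> cond_arcs V A" using arcs[of 2] len by (simp add: numeral_2_eq_2 numeral_3_eq_3)
  obtain x y where xy: "x \<in> ps!1" "y \<in> ps!2" "(x,y) \<in> A" and ne: "ps!1 \<noteq> ps!2"
    and c1: "ps!1 \<in> cond_vertices V A" and c2: "ps!2 \<in> cond_vertices V A"
    using a2 by (auto simp: cond_arcs_def)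
  obtain a b where ab: "a \<in> ps!0" "b \<in> ps!1" "(a,b) \<in> A" using a1 by (auto simp: cond_arcs_def)
  obtain c d where cd: "c \<in> ps!2" "d \<in> ps!3" "(c,d) \<in> A" using a3 by (auto simp: cond_arcs_def)
  obtain z where z: "ps!1 = strong_component V A z" using c1 by (auto simp: cond_vertices_def)
  obtain w where w: "ps!2 = strong_component V A w" using c2 by (auto simp: cond_vertices_def)
  have bx: "(b,x) \<in> A\<^sup>*"
  proof -
    have "(z,x) \<in> A\<^sup>*" "(b,z) \<in> A\<^sup>*" using xy(1) ab(2) z by (auto simp: strong_component_def)
    thus ?thesis by (meson rtrancl_trans)
  qed
  have yc: "(y,c) \<in> A\<^sup>*"
  proof -
    have "(y,w) \<in> A\<^sup>*" "(w,c) \<in> A\<^sup>*" using xy(2) cd(1) w by (auto simp: strong_component_def)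
    thus ?thesis by (meson rtrancl_trans)
  qed
  from key[OF xy(3)] show False
  proof (elim disjE)
    assume "(y,x) \<in> A\<^sup>*"
    hence "ps!1 = ps!2" using sc_eq[of x V A z y w] xy z w by auto
    thus False using ne by simp
  next
    assume nin: "\<forall>r. (r,x) \<notin> A"
    from bx show False
    proof (cases rule: rtranclE)
      case base thus False using ab nin by auto
    next
      case (step c') thus False using nin by auto
    qed
  next
    assume nout: "\<forall>r. (y,r) \<notin> A"
    from yc show False
    proof (cases rule: converse_rtranclE)
      case base thus False using cd nout by auto
    next
      case (step c') thus False using nout by auto
    qed
  qed
qed


lemma key_arc:
  assumes bg: "bigraph B W E" and pq: "(p,q) \<in> pair_arcs B W E"
  shows "(q,p) \<in> (pair_arcs B W E)\<^sup>* \<or> (\<forall>r. (r,p) \<notin> pair_arcs B W E) \<or> (\<forall>r. (q,r) \<notin> pair_arcs B W E)"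
proof -
  let ?A = "pair_arcs B W E"
  have sym: "\<And>x y. E x y \<Longrightarrow> E y x" and bip: "\<And>x y. E x y \<Longrightarrow> (x \<in> B \<and> y \<in> W) \<or> (x \<in> W \<and> y \<in> B)"
    and dis: "B \<inter> W = {}" using bg by (auto simp: bigraph_def)
  have pv: "p \<in> pair_vertices B W" "q \<in> pair_vertices B W" using pq by (auto simp: pair_arcs_def)
  from pq consider (S) u v u' where "p = (u,v)" "q = (u',v)" "same_colour B W u v" "E u u'" "\<not> E v u'"
    | (D) u v v' where "p = (u,v)" "q = (u,v')" "\<not> same_colour B W u v" "E v v'" "\<not> E u v"
    unfolding pair_arcs_def by blast
  thus ?thesis
  proof cases
    case S
    show ?thesis
    proof (cases "\<exists>x. E v x \<and> \<not> E u x")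
      case True
      then obtain x where x: "E v x" "\<not> E u x" by blast
      have e1: "((u',v),(u',x)) \<in> ?A" using S x pv sym bip dis
        unfolding pair_arcs_def pair_vertices_def same_colour_def by blast
      have e2: "((u',x),(u,x)) \<in> ?A" using S x pv sym bip dis
        unfolding pair_arcs_def pair_vertices_def same_colour_def by blast
      have e3: "((u,x),(u,v)) \<in> ?A" using S x pv sym bip dis
        unfolding pair_arcs_def pair_vertices_def same_colour_def by blast
      have "(q,p) \<in> ?A\<^sup>*" using e1 e2 e3 S by (meson converse_rtrancl_into_rtrancl r_into_rtrancl)
      thus ?thesis by blast
    next
      case False
      have "\<forall>r. (r,p) \<notin> ?A"
      proof
        fix r show "(r,p) \<notin> ?A"
        proof
          assume "(r,p) \<in> ?A"
          then consider (S1) a b a' where "r = (a,b)" "p = (a',b)" "same_colour B W a b" "E a a'" "\<not> E b a'"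
            | (D1) a b b' where "r = (a,b)" "p = (a,b')" "\<not> same_colour B W a b" "E b b'" "\<not> E a b"
            unfolding pair_arcs_def by blast
          thus False
          proof cases
            case S1 thus False using S bip dis unfolding same_colour_def by blast
          next
            case D1 thus False using S False sym by blast
          qed
        qed
      qed
      thus ?thesis by blast
    qed
  next
    case D
    show ?thesis
    proof (cases "\<exists>x. E u x \<and> \<not> E v' x")
      case True
      then obtain x where x: "E u x" "\<not> E v' x" by blast
      have e1: "((u,v'),(x,v')) \<in> ?A" using D x pv sym bip dis
        unfolding pair_arcs_def pair_vertices_def same_colour_def by blast
      have e2: "((x,v'),(x,v)) \<in> ?A" using D x pv sym bip dis
        unfolding pair_arcs_def pair_vertices_def same_colour_def by blast
      have e3: "((x,v),(u,v)) \<in> ?A" using D x pv sym bip dis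
        unfolding pair_arcs_def pair_vertices_def same_colour_def by blast
      have "(q,p) \<in> ?A\<^sup>*" using e1 e2 e3 D by (meson converse_rtrancl_into_rtrancl r_into_rtrancl)
      thus ?thesis by blast
    next
      case False
      have "\<forall>r. (q,r) \<notin> ?A"
      proof
        fix r show "(q,r) \<notin> ?A"
        proof
          assume "(q,r) \<in> ?A"
          then consider (S1) a b a' where "q = (a,b)" "r = (a',b)" "same_colour B W a b" "E a a'" "\<not> E b a'"
            | (D1) a b b' where "q = (a,b)" "r = (a,b')" "\<not> same_colour B W a b" "E b b'" "\<not> E a b"
            unfolding pair_arcs_def by blast
          thus False
          proof cases
            case S1 thus False using D False by blast
          next
            case D1 thus False using D pv bip dis unfolding same_colour_def pair_vertices_def by blast
          qed
        qed
      qed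
      thus ?thesis by blast
    qed
  qed
qed

theorem lemma2p8:
  fixes B W :: "'a set" and E :: "'a \<Rightarrow> 'a \<Rightarrow> bool" and ps :: "('a \<times> 'a) set list"
  assumes "bigraph B W E"
    and "dipath (cond_vertices (pair_vertices B W) (pair_arcs B W E))
                (cond_arcs (pair_vertices B W) (pair_arcs B W E)) ps"
  shows "length ps \<le> 3"
  by (rule cond_generic[OF key_arc[OF assms(1)] assms(2)])

end
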